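(* Fix $\underline\mu=\{\mu_{lk}\in\mathbb C^\tau\}$ and let $A_{lk}=\sum_{(i,j)}\alpha_{ij}\beta_{ilk}\mu_{ij}\mu_{ij}^H$. For each user $(l,k)$ and $s\in[1:\tau]$ let $c^{(s)}_{lk}=\alpha_{lk}\beta_{llk}\Re\{\mu_{lk}^H\varphi_s\}$, $b^{(s)}_{lk}=\varphi_s^HA_{lk}\varphi_s$, let $p^{(s)}_{lk}$ be a maximizer of $p\mapsto 2\sqrt p\,c^{(s)}_{lk}-p\,b^{(s)}_{lk}$ over $p\in[0,P_{\max}]$, and let $\pi^{(s)}_{lk}=2\sqrt{p^{(s)}_{lk}}\,c^{(s)}_{lk}-p^{(s)}_{lk}b^{(s)}_{lk}$. Then $$f(\underline p,\underline\psi,\underline\mu)=\sum_{(l,k)}\big(2\sqrt{p_{lk}}\,\alpha_{lk}\beta_{llk}\Re\{\mu_{lk}^H\psi_{lk}\}-p_{lk}\psi_{lk}^HA_{lk}\psi_{lk}\big)-\sigma^2\sum_{(l,k)}\alpha_{lk}\|\mu_{lk}\|^2,$$ and the maximum of $f(\cdot,\cdot,\underline\mu)$ over the feasible set $\mathcal F$ equals $\Pi^\star-\sigma^2\sum_{(l,k)}\alpha_{lk}\|\mu_{lk}\|^2$, where $\Pi^\star$ is the optimal value of the assignment problem: maximize $\sum_{(l,k,s)}\pi^{(s)}_{lk}x^{(s)}_{lk}$ over $x^{(s)}_{lk}\in\{0,1\}$ subject to $\sum_{s=1}^\tau x^{(s)}_{lk}=1$ for each $(l,k)$ and $\sum_{k=1}^K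 x^{(s)}_{lk}\le1$ for each $(l,s)$. Moreover, for any optimal $x$, setting $p_{lk}=\sum_sx^{(s)}_{lk}p^{(s)}_{lk}$ and $\psi_{lk}=\sum_sx^{(s)}_{lk}\varphi_s$ gives a maximizer of $f(\cdot,\cdot,\underline\mu)$ over $\mathcal F$.
   Context: $L$ cells indexed by $l,i$, each with $K$ users indexed by $k,j$, with $K\le\tau$; sums over $(i,j)$ or $(l,k)$ range over all $LK$ users. Noise variance $\sigma^2>0$, power budget $P_{\max}>0$, large-scale fading $\beta_{lij}>0$, weights $\alpha_{lk}>0$. $\{\varphi_1,\dots,\varphi_\tau\}\subset\mathbb C^\tau$ satisfy $\varphi_s^H\varphi_t=\tau$ if $s=t$ and $0$ otherwise. Orthogonal pilot design variables: powers $p_{lk}$ and normalized pilots $\psi_{lk}$; the feasible set $\mathcal F$ consists of all $(\underline p,\underline\psi)$ with $0\le p_{lk}\le P_{\max}$, $\psi_{lk}\in\{\varphi_1,\dots,\varphi_\tau\}$, and $\psi_{lk}\neq\psi_{lk'}$ for $k\neq k'$ (same cell). $D_l=\sigma^2I_\tau+\sum_{(i,j)}\beta_{lij}p_{ij}\psi_{ij}\psi_{ij}^H$, and $f(\underline p,\underline\psi,\underline\mu)=\sum_{(l,k)}\alpha_{lk}\big(2\beta_{llk}\sqrt{p_{lk}}\Re\{\mu_{lk}^H\psi_{lk}\}-\mu_{lk}^HD_l\mu_{lk}\big)$. *)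

theory Defs
  imports "HOL-Analysis.Analysis"
begin

text \<open>Vectors in C^tau are modelled as complex ^ 'n with tau = CARD('n).
  Cells are indexed by l < L, users by k < K, pilot indices by s < tau.\<close>

definition cinner :: "complex ^ 'n \<Rightarrow> complex ^ 'n \<Rightarrow> complex" where
  "cinner u v = (\<Sum>t\<in>UNIV. cnj (u $ t) * v $ t)"

definition outer :: "complex ^ 'n \<Rightarrow> complex ^ 'n \<Rightarrow> complex ^ 'n ^ 'n" where
  "outer u v = (\<chi> a b. u $ a * cnj (v $ b))"

definition qform :: "complex ^ 'n ^ 'n \<Rightarrow> complex ^ 'n \<Rightarrow> complex" where
  "qform M u = cinner u (M *v u)"

definition Dmat :: "nat \<Rightarrow> nat \<Rightarrow> real \<Rightarrow> (nat \<Rightarrow> nat \<Rightarrow> nat \<Rightarrow> real)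
    \<Rightarrow> (nat \<Rightarrow> nat \<Rightarrow> real) \<Rightarrow> (nat \<Rightarrow> nat \<Rightarrow> complex ^ 'n) \<Rightarrow> nat \<Rightarrow> complex ^ 'n ^ 'n" where
  "Dmat L K sigma2 \<beta> p \<psi> l =
     sigma2 *\<^sub>R mat 1 +
     (\<Sum>i<L. \<Sum>j<K. (\<beta> l i j * p i j) *\<^sub>R outer (\<psi> i j) (\<psi> i j))"

definition fobj :: "nat \<Rightarrow> nat \<Rightarrow> real \<Rightarrow> (nat \<Rightarrow> nat \<Rightarrow> real) \<Rightarrow> (nat \<Rightarrow> nat \<Rightarrow> nat \<Rightarrow> real)
    \<Rightarrow> (nat \<Rightarrow> nat \<Rightarrow> real) \<Rightarrow> (nat \<Rightarrow> nat \<Rightarrow> complex ^ 'n) \<Rightarrow> (nat \<Rightarrow> nat \<Rightarrow> complex ^ 'n) \<Rightarrow> real" where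
  "fobj L K sigma2 \<alpha> \<beta> p \<psi> \<mu> =
     (\<Sum>l<L. \<Sum>k<K. \<alpha> l k *
        (2 * \<beta> l l k * sqrt (p l k) * Re (cinner (\<mu> l k) (\<psi> l k))
         - Re (qform (Dmat L K sigma2 \<beta> p \<psi> l) (\<mu> l k))))"

definition feasible :: "nat \<Rightarrow> nat \<Rightarrow> real \<Rightarrow> (nat \<Rightarrow> complex ^ 'n)
    \<Rightarrow> (nat \<Rightarrow> nat \<Rightarrow> real) \<Rightarrow> (nat \<Rightarrow> nat \<Rightarrow> complex ^ 'n) \<Rightarrow> bool" where
  "feasible L K Pmax \<phi> p \<psi> \<longleftrightarrow>
     (\<forall>l<L. \<forall>k<K. 0 \<le> p l k \<and> p l k \<le> Pmax \<and> \<psi> l k \<in> \<phi> ` {0..<CARD('n)}) \<and>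
     (\<forall>l<L. \<forall>k<K. \<forall>k'<K. k \<noteq> k' \<longrightarrow> \<psi> l k \<noteq> \<psi> l k')"

definition Amat :: "nat \<Rightarrow> nat \<Rightarrow> (nat \<Rightarrow> nat \<Rightarrow> real) \<Rightarrow> (nat \<Rightarrow> nat \<Rightarrow> nat \<Rightarrow> real)
    \<Rightarrow> (nat \<Rightarrow> nat \<Rightarrow> complex ^ 'n) \<Rightarrow> nat \<Rightarrow> nat \<Rightarrow> complex ^ 'n ^ 'n" where
  "Amat L K \<alpha> \<beta> \<mu> l k = (\<Sum>i<L. \<Sum>j<K. (\<alpha> i j * \<beta> i l k) *\<^sub>R outer (\<mu> i j) (\<mu> i j))"

definition assign_feasible :: "nat \<Rightarrow> nat \<Rightarrow> nat \<Rightarrow> (nat \<Rightarrow> nat \<Rightarrow> nat \<Rightarrow> real) \<Rightarrow> bool" where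
  "assign_feasible L K tau x \<longleftrightarrow>
     (\<forall>l<L. \<forall>k<K. \<forall>s<tau. x l k s \<in> {0, 1}) \<and>
     (\<forall>l<L. \<forall>k<K. (\<Sum>s<tau. x l k s) = 1) \<and>
     (\<forall>l<L. \<forall>s<tau. (\<Sum>k<K. x l k s) \<le> 1)"

definition assign_obj :: "nat \<Rightarrow> nat \<Rightarrow> nat \<Rightarrow> (nat \<Rightarrow> nat \<Rightarrow> nat \<Rightarrow> real)
    \<Rightarrow> (nat \<Rightarrow> nat \<Rightarrow> nat \<Rightarrow> real) \<Rightarrow> real" where
  "assign_obj L K tau \<pi> x = (\<Sum>l<L. \<Sum>k<K. \<Sum>s<tau. \<pi> l k s * x l k s)"

definition assign_opt :: "nat \<Rightarrow> nat \<Rightarrow> nat \<Rightarrow> (nat \<Rightarrow> nat \<Rightarrow> nat \<Rightarrow> real) \<Rightarrow> real" where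
  "assign_opt L K tau \<pi> = (SUP x \<in> {x. assign_feasible L K tau x}. assign_obj L K tau \<pi> x)"

end

theory Submission
  imports Defs "HOL-Library.FuncSet"
begin



lemma cinner_add_right: "cinner u (v + w) = cinner u v + cinner u w"
  unfolding cinner_def by (simp add: distrib_left sum.distrib)

lemma qform_add: "qform (M + N) u = qform M u + qform N u"
  unfolding qform_def by (simp add: matrix_vector_mult_add_rdistrib cinner_add_right)

lemma cinner_scale_right: "cinner u (c *\<^sub>R w) = of_real c * cinner u w"
proof -
  have "\<And>t. (c *\<^sub>R w) $ t = of_real c * w $ t"
  proof -
    fix t
    have "(c *\<^sub>R w) $ t = c *\<^sub>R (w $ t)" by simp
    also have "\<dots> = of_real c * w $ t" by (simp add: scaleR_conv_of_real)
    finally show "(c *\<^sub>R w) $ t = of_real c * w $ t" .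
  qed
  then show ?thesis unfolding cinner_def by (simp add: sum_distrib_left algebra_simps)
qed

lemma qform_scale: "qform (c *\<^sub>R M) u = of_real c * qform M u"
proof -
  have "(c *\<^sub>R M) *v u = c *\<^sub>R (M *v u)" by (simp add: matrix_vector_mult_def vec_eq_iff scaleR_sum_right)
  then show ?thesis unfolding qform_def by (simp add: cinner_scale_right)
qed

lemma qform_zero: "qform 0 u = 0"
  unfolding qform_def cinner_def by simp

lemma qform_sum: "finite A \<Longrightarrow> qform (\<Sum>i\<in>A. M i) u = (\<Sum>i\<in>A. qform (M i) u)"
  by (induction A rule: finite_induct) (simp_all add: qform_zero qform_add)

lemma cinner_cnj: "cinner v u = cnj (cinner u v)"
  unfolding cinner_def by (simp add: mult.commute)

lemma qform_outer: "qform (outer v v) u = cinner u v * cinner v u"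
proof -
  have "outer v v *v u = (\<chi> a. v $ a * cinner v u)"
    unfolding outer_def cinner_def matrix_vector_mult_def
    by (simp add: sum_distrib_left algebra_simps)
  then have "qform (outer v v) u = (\<Sum>t\<in>UNIV. cnj (u $ t) * v $ t * cinner v u)"
    unfolding qform_def cinner_def[of u] by (simp add: algebra_simps)
  also have "\<dots> = cinner u v * cinner v u"
    unfolding sum_distrib_right[symmetric] cinner_def[of u v] ..
  finally show ?thesis .
qed

lemma Re_qform_outer: "Re (qform (outer v v) u) = (cmod (cinner v u))\<^sup>2"
  unfolding qform_outer cinner_cnj[of u v]
  by (simp add: complex_mult_cnj) (metis cmod_power2 power2_eq_square)

lemma qform_id: "Re (qform (mat 1) u) = (norm u)\<^sup>2"
proof -
  have "(norm u)\<^sup>2 = u \<bullet> u" by (simp add: power2_norm_eq_inner)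
  also have "\<dots> = (\<Sum>i\<in>UNIV. (cmod (u $ i))\<^sup>2)"
    unfolding inner_vec_def by (simp add: power2_norm_eq_inner)
  finally show ?thesis unfolding qform_def cinner_def
    by (simp add: complex_mult_cnj cmod_power2 mult.commute)
qed



lemma sum4_swap:
  "(\<Sum>l\<in>A. \<Sum>k\<in>B. \<Sum>i\<in>A. \<Sum>j\<in>B. h l k i j) = (\<Sum>i\<in>A. \<Sum>j\<in>B. \<Sum>l\<in>A. \<Sum>k\<in>B. (h l k i j :: real))"
proof -
  have 1: "\<And>l. (\<Sum>k\<in>B. \<Sum>i\<in>A. \<Sum>j\<in>B. h l k i j) = (\<Sum>i\<in>A. \<Sum>j\<in>B. \<Sum>k\<in>B. h l k i j)"
  proof -
    fix l
    have "(\<Sum>k\<in>B. \<Sum>i\<in>A. \<Sum>j\<in>B. h l k i j) = (\<Sum>i\<in>A. \<Sum>k\<in>B. \<Sum>j\<in>B. h l k i j)"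
      by (rule sum.swap)
    also have "\<dots> = (\<Sum>i\<in>A. \<Sum>j\<in>B. \<Sum>k\<in>B. h l k i j)"
      by (rule sum.cong[OF refl], rule sum.swap)
    finally show "?thesis l" .
  qed
  have "(\<Sum>l\<in>A. \<Sum>k\<in>B. \<Sum>i\<in>A. \<Sum>j\<in>B. h l k i j) = (\<Sum>l\<in>A. \<Sum>i\<in>A. \<Sum>j\<in>B. \<Sum>k\<in>B. h l k i j)"
    using 1 by simp
  also have "\<dots> = (\<Sum>i\<in>A. \<Sum>l\<in>A. \<Sum>j\<in>B. \<Sum>k\<in>B. h l k i j)" by (rule sum.swap)
  also have "\<dots> = (\<Sum>i\<in>A. \<Sum>j\<in>B. \<Sum>l\<in>A. \<Sum>k\<in>B. h l k i j)"
    by (rule sum.cong[OF refl], rule sum.swap)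
  finally show ?thesis .
qed

lemma cmod_cinner_sym: "cmod (cinner u v) = cmod (cinner v u)"
  by (metis cinner_cnj complex_mod_cnj)

lemma fobj_expand:
  "fobj L K sigma2 \<alpha> \<beta> p \<psi> \<mu> =
        (\<Sum>l<L. \<Sum>k<K. 2 * sqrt (p l k) * \<alpha> l k * \<beta> l l k * Re (cinner (\<mu> l k) (\<psi> l k))
            - p l k * Re (qform (Amat L K \<alpha> \<beta> \<mu> l k) (\<psi> l k))) - sigma2 * (\<Sum>l<L. \<Sum>k<K. \<alpha> l k * (norm (\<mu> l k))\<^sup>2)"
proof -
  define G where "G a b = (cmod (cinner a b))\<^sup>2" for a b :: "complex^'a"
  have GS: "G a b = G b a" for a b unfolding G_def using cmod_cinner_sym by metis
  have D: "Re (qform (Dmat L K sigma2 \<beta> p \<psi> l) (\<mu> l k)) = sigma2 * (norm (\<mu> l k))\<^sup>2 +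
       (\<Sum>i<L. \<Sum>j<K. \<beta> l i j * p i j * G (\<mu> l k) (\<psi> i j))" for l k
    unfolding Dmat_def qform_add qform_scale
    by (simp add: qform_sum qform_scale qform_id Re_qform_outer G_def cmod_cinner_sym)
  have A: "Re (qform (Amat L K \<alpha> \<beta> \<mu> l k) (\<psi> l k)) =
       (\<Sum>i<L. \<Sum>j<K. \<alpha> i j * \<beta> i l k * G (\<mu> i j) (\<psi> l k))" for l k
    unfolding Amat_def
    by (simp add: qform_sum qform_scale Re_qform_outer G_def)
  define h where "h l k i j = \<alpha> l k * \<beta> l i j * p i j * G (\<mu> l k) (\<psi> i j)" for l k i j
  have Q: "(\<Sum>l<L. \<Sum>k<K. \<Sum>i<L. \<Sum>j<K. h l k i j) = (\<Sum>i<L. \<Sum>j<K. \<Sum>l<L. \<Sum>k<K. h l k i j)"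
    by (rule sum4_swap)
  have Q1: "(\<Sum>l<L. \<Sum>k<K. \<alpha> l k * (\<Sum>i<L. \<Sum>j<K. \<beta> l i j * p i j * G (\<mu> l k) (\<psi> i j)))
     = (\<Sum>l<L. \<Sum>k<K. \<Sum>i<L. \<Sum>j<K. h l k i j)"
    unfolding h_def by (simp add: sum_distrib_left mult.assoc)
  have Q2: "(\<Sum>l<L. \<Sum>k<K. p l k * (\<Sum>i<L. \<Sum>j<K. \<alpha> i j * \<beta> i l k * G (\<mu> i j) (\<psi> l k)))
     = (\<Sum>i<L. \<Sum>j<K. \<Sum>l<L. \<Sum>k<K. h l k i j)"
    unfolding h_def by (simp add: sum_distrib_left algebra_simps)
  have "fobj L K sigma2 \<alpha> \<beta> p \<psi> \<mu> =
     (\<Sum>l<L. \<Sum>k<K. 2 * sqrt (p l k) * \<alpha> l k * \<beta> l l k * Re (cinner (\<mu> l k) (\<psi> l k)))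
     - sigma2 * (\<Sum>l<L. \<Sum>k<K. \<alpha> l k * (norm (\<mu> l k))\<^sup>2)
     - (\<Sum>l<L. \<Sum>k<K. \<alpha> l k * (\<Sum>i<L. \<Sum>j<K. \<beta> l i j * p i j * G (\<mu> l k) (\<psi> i j)))"
    unfolding fobj_def D
    by (simp add: sum_subtractf sum_distrib_left algebra_simps sum.distrib)
  moreover have "(\<Sum>l<L. \<Sum>k<K. 2 * sqrt (p l k) * \<alpha> l k * \<beta> l l k * Re (cinner (\<mu> l k) (\<psi> l k))
            - p l k * Re (qform (Amat L K \<alpha> \<beta> \<mu> l k) (\<psi> l k))) =
     (\<Sum>l<L. \<Sum>k<K. 2 * sqrt (p l k) * \<alpha> l k * \<beta> l l k * Re (cinner (\<mu> l k) (\<psi> l k)))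
     - (\<Sum>l<L. \<Sum>k<K. p l k * (\<Sum>i<L. \<Sum>j<K. \<alpha> i j * \<beta> i l k * G (\<mu> i j) (\<psi> l k)))"
    unfolding A by (simp add: sum_subtractf)
  ultimately show ?thesis using Q Q1 Q2 by simp
qed

theorem mainTheorem7:
  fixes L K :: nat and sigma2 Pmax :: real
    and \<alpha> :: "nat \<Rightarrow> nat \<Rightarrow> real" and \<beta> :: "nat \<Rightarrow> nat \<Rightarrow> nat \<Rightarrow> real"
    and \<phi> :: "nat \<Rightarrow> complex ^ 'n"
    and \<mu> :: "nat \<Rightarrow> nat \<Rightarrow> complex ^ 'n"
    and ps :: "nat \<Rightarrow> nat \<Rightarrow> nat \<Rightarrow> real"
  assumes K_le: "K \<le> CARD('n)"
    and sigma_pos: "sigma2 > 0"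
    and Pmax_pos: "Pmax > 0"
    and beta_pos: "\<And>l i j. l < L \<Longrightarrow> i < L \<Longrightarrow> j < K \<Longrightarrow> \<beta> l i j > 0"
    and alpha_pos: "\<And>l k. l < L \<Longrightarrow> k < K \<Longrightarrow> \<alpha> l k > 0"
    and phi_orth: "\<And>s t. s < CARD('n) \<Longrightarrow> t < CARD('n) \<Longrightarrow>
        cinner (\<phi> s) (\<phi> t) = (if s = t then of_nat CARD('n) else 0)"
    and ps_max: "\<And>l k s. l < L \<Longrightarrow> k < K \<Longrightarrow> s < CARD('n) \<Longrightarrow>
        0 \<le> ps l k s \<and> ps l k s \<le> Pmax \<and>
        (\<forall>q\<in>{0..Pmax}.
           2 * sqrt q * (\<alpha> l k * \<beta> l l k * Re (cinner (\<mu> l k) (\<phi> s)))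
             - q * Re (qform (Amat L K \<alpha> \<beta> \<mu> l k) (\<phi> s))
           \<le> 2 * sqrt (ps l k s) * (\<alpha> l k * \<beta> l l k * Re (cinner (\<mu> l k) (\<phi> s)))
             - ps l k s * Re (qform (Amat L K \<alpha> \<beta> \<mu> l k) (\<phi> s)))"
  defines "\<pi> \<equiv> (\<lambda>l k s.
        2 * sqrt (ps l k s) * (\<alpha> l k * \<beta> l l k * Re (cinner (\<mu> l k) (\<phi> s)))
          - ps l k s * Re (qform (Amat L K \<alpha> \<beta> \<mu> l k) (\<phi> s)))"
    and "C \<equiv> sigma2 * (\<Sum>l<L. \<Sum>k<K. \<alpha> l k * (norm (\<mu> l k))\<^sup>2)"
  shows
    "(\<forall>p \<psi>. fobj L K sigma2 \<alpha> \<beta> p \<psi> \<mu> =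
        (\<Sum>l<L. \<Sum>k<K. 2 * sqrt (p l k) * \<alpha> l k * \<beta> l l k * Re (cinner (\<mu> l k) (\<psi> l k))
            - p l k * Re (qform (Amat L K \<alpha> \<beta> \<mu> l k) (\<psi> l k))) - C)
     \<and> (\<exists>p \<psi>. feasible L K Pmax \<phi> p \<psi> \<and>
          fobj L K sigma2 \<alpha> \<beta> p \<psi> \<mu> = assign_opt L K CARD('n) \<pi> - C)
     \<and> (\<forall>p \<psi>. feasible L K Pmax \<phi> p \<psi> \<longrightarrow>
          fobj L K sigma2 \<alpha> \<beta> p \<psi> \<mu> \<le> assign_opt L K CARD('n) \<pi> - C)
     \<and> (\<forall>x. assign_feasible L K CARD('n) x \<and>
             assign_obj L K CARD('n) \<pi> x = assign_opt L K CARD('n) \<pi> \<longrightarrow>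
          (let p = (\<lambda>l k. \<Sum>s<CARD('n). x l k s * ps l k s);
               \<psi> = (\<lambda>l k. \<Sum>s<CARD('n). x l k s *\<^sub>R \<phi> s)
           in feasible L K Pmax \<phi> p \<psi> \<and>
              (\<forall>p' \<psi>'. feasible L K Pmax \<phi> p' \<psi>' \<longrightarrow>
                 fobj L K sigma2 \<alpha> \<beta> p' \<psi>' \<mu> \<le> fobj L K sigma2 \<alpha> \<beta> p \<psi> \<mu>)))"
proof -
  let ?n = "CARD('n)"
  define T where "T p \<psi> = (\<Sum>l<L. \<Sum>k<K. 2 * sqrt (p l k) * \<alpha> l k * \<beta> l l k * Re (cinner (\<mu> l k) (\<psi> l k))
            - p l k * Re (qform (Amat L K \<alpha> \<beta> \<mu> l k) (\<psi> l k)))" for p \<psi>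
  have P1: "fobj L K sigma2 \<alpha> \<beta> p \<psi> \<mu> = T p \<psi> - C" for p \<psi>
    unfolding T_def C_def by (rule fobj_expand)
  have phi_inj: "s = t" if "s < ?n" "t < ?n" "\<phi> s = \<phi> t" for s t
  proof (rule ccontr)
    assume "s \<noteq> t"
    then have "cinner (\<phi> s) (\<phi> t) = 0" using phi_orth[OF that(1,2)] by simp
    moreover have "cinner (\<phi> s) (\<phi> s) = of_nat ?n" using phi_orth[OF that(1,1)] by simp
    ultimately show False using that(3) by simp
  qed
  have xnn: "0 \<le> x l k s" if "assign_feasible L K ?n x" "l < L" "k < K" "s < ?n" for x l k s
    using that unfolding assign_feasible_def by force
  have uniq: "\<exists>s0 < ?n. \<forall>s < ?n. x l k s = (if s = s0 then 1 else 0)"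
    if xf: "assign_feasible L K ?n x" and lk: "l < L" "k < K" for x l k
  proof -
    have vals: "\<forall>s<?n. x l k s \<in> {0,1}" and sum1: "(\<Sum>s<?n. x l k s) = 1"
      using xf lk unfolding assign_feasible_def by auto
    have "\<exists>s0<?n. x l k s0 = 1"
    proof (rule ccontr)
      assume "\<not> ?thesis"
      then have "\<forall>s<?n. x l k s = 0" using vals by auto
      then have "(\<Sum>s<?n. x l k s) = 0" by simp
      then show False using sum1 by simp
    qed
    then obtain s0 where s0: "s0 < ?n" "x l k s0 = 1" by blast
    have "(\<Sum>s<?n. x l k s) = x l k s0 + (\<Sum>s\<in>{..<?n} - {s0}. x l k s)"
      using s0 by (simp add: sum.remove)
    then have rest0: "(\<Sum>s\<in>{..<?n} - {s0}. x l k s) = 0" using sum1 s0 by simp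
    have "\<forall>s\<in>{..<?n} - {s0}. x l k s = 0"
      using rest0 sum_nonneg_eq_0_iff[of "{..<?n} - {s0}" "x l k"] xnn[OF xf lk] by auto
    then show ?thesis using s0 by (intro exI[of _ s0]) auto
  qed
  have constr: "feasible L K Pmax \<phi> (\<lambda>l k. \<Sum>s<?n. x l k s * ps l k s) (\<lambda>l k. \<Sum>s<?n. x l k s *\<^sub>R \<phi> s)
      \<and> T (\<lambda>l k. \<Sum>s<?n. x l k s * ps l k s) (\<lambda>l k. \<Sum>s<?n. x l k s *\<^sub>R \<phi> s) = assign_obj L K ?n \<pi> x"
    if xf: "assign_feasible L K ?n x" for x
  proof -
    define sel where "sel l k = (SOME s0. s0 < ?n \<and> (\<forall>s < ?n. x l k s = (if s = s0 then 1 else 0)))" for l k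
    have selp: "sel l k < ?n \<and> (\<forall>s < ?n. x l k s = (if s = sel l k then 1 else 0))" if "l < L" "k < K" for l k
      unfolding sel_def using someI_ex[OF uniq[OF xf that]] by blast
    have pe: "(\<Sum>s<?n. x l k s * ps l k s) = ps l k (sel l k)"
     and qe: "(\<Sum>s<?n. x l k s *\<^sub>R \<phi> s) = \<phi> (sel l k)"
     and oe: "(\<Sum>s<?n. \<pi> l k s * x l k s) = \<pi> l k (sel l k)" if "l < L" "k < K" for l k
    proof -
      have "(\<Sum>s<?n. x l k s * ps l k s) = (\<Sum>s<?n. if s = sel l k then ps l k s else 0)"
        using selp[OF that] by (intro sum.cong) auto
      then show "(\<Sum>s<?n. x l k s * ps l k s) = ps l k (sel l k)" using selp[OF that] by simp
      have "(\<Sum>s<?n. x l k s *\<^sub>R \<phi> s) = (\<Sum>s<?n. if s = sel l k then \<phi> s else 0)"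
        using selp[OF that] by (intro sum.cong) auto
      then show "(\<Sum>s<?n. x l k s *\<^sub>R \<phi> s) = \<phi> (sel l k)" using selp[OF that] by simp
      have "(\<Sum>s<?n. \<pi> l k s * x l k s) = (\<Sum>s<?n. if s = sel l k then \<pi> l k s else 0)"
        using selp[OF that] by (intro sum.cong) auto
      then show "(\<Sum>s<?n. \<pi> l k s * x l k s) = \<pi> l k (sel l k)" using selp[OF that] by simp
    qed
    have feas: "feasible L K Pmax \<phi> (\<lambda>l k. \<Sum>s<?n. x l k s * ps l k s) (\<lambda>l k. \<Sum>s<?n. x l k s *\<^sub>R \<phi> s)"
      unfolding feasible_def
    proof (intro conjI allI impI)
      fix l k assume lk: "l < L" "k < K"
      show "0 \<le> (\<Sum>s<?n. x l k s * ps l k s)" "(\<Sum>s<?n. x l k s * ps l k s) \<le> Pmax"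
        using pe[OF lk] ps_max[OF lk] selp[OF lk] by auto
      show "(\<Sum>s<?n. x l k s *\<^sub>R \<phi> s) \<in> \<phi> ` {0..<?n}"
        using qe[OF lk] selp[OF lk] by auto
    next
      fix l k k' assume lk: "l < L" "k < K" "k' < K" "k \<noteq> k'"
      show "(\<Sum>s<?n. x l k s *\<^sub>R \<phi> s) \<noteq> (\<Sum>s<?n. x l k' s *\<^sub>R \<phi> s)"
      proof
        assume "(\<Sum>s<?n. x l k s *\<^sub>R \<phi> s) = (\<Sum>s<?n. x l k' s *\<^sub>R \<phi> s)"
        then have "\<phi> (sel l k) = \<phi> (sel l k')" using qe lk by simp
        then have eq: "sel l k = sel l k'" using phi_inj selp lk by blast
        let ?s = "sel l k"
        have s1: "x l k ?s = 1" "x l k' ?s = 1" using selp[of l k] selp[of l k'] lk eq by auto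
        have "(\<Sum>j\<in>{k,k'}. x l j ?s) \<le> (\<Sum>j<K. x l j ?s)"
          using lk by (intro sum_mono2) (auto intro: xnn[OF xf] simp: selp)
        moreover have "(\<Sum>j\<in>{k,k'}. x l j ?s) = 2" using s1 lk by simp
        moreover have "(\<Sum>j<K. x l j ?s) \<le> 1" using xf lk selp unfolding assign_feasible_def by blast
        ultimately show False by simp
      qed
    qed
    have "T (\<lambda>l k. \<Sum>s<?n. x l k s * ps l k s) (\<lambda>l k. \<Sum>s<?n. x l k s *\<^sub>R \<phi> s)
          = (\<Sum>l<L. \<Sum>k<K. \<pi> l k (sel l k))"
      unfolding T_def
    proof (intro sum.cong refl)
      fix l k assume "l \<in> {..<L}" "k \<in> {..<K}"
      then have lk: "l < L" "k < K" by auto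
      show "2 * sqrt (\<Sum>s<?n. x l k s * ps l k s) * \<alpha> l k * \<beta> l l k * Re (cinner (\<mu> l k) (\<Sum>s<?n. x l k s *\<^sub>R \<phi> s))
            - (\<Sum>s<?n. x l k s * ps l k s) * Re (qform (Amat L K \<alpha> \<beta> \<mu> l k) (\<Sum>s<?n. x l k s *\<^sub>R \<phi> s)) = \<pi> l k (sel l k)"
        unfolding pe[OF lk] qe[OF lk] \<pi>_def by (simp add: mult.assoc)
    qed
    also have "\<dots> = assign_obj L K ?n \<pi> x"
      unfolding assign_obj_def by (intro sum.cong refl) (simp add: oe)
    finally show ?thesis using feas by simp
  qed
  have bound: "\<exists>x. assign_feasible L K ?n x \<and> T p \<psi> \<le> assign_obj L K ?n \<pi> x"
    if pf: "feasible L K Pmax \<phi> p \<psi>" for p \<psi>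
  proof -
    define sel where "sel l k = (SOME s. s < ?n \<and> \<psi> l k = \<phi> s)" for l k
    have selp: "sel l k < ?n \<and> \<psi> l k = \<phi> (sel l k)" if "l < L" "k < K" for l k
    proof -
      have "\<psi> l k \<in> \<phi> ` {0..<?n}" using pf that unfolding feasible_def by blast
      then have "\<exists>s. s < ?n \<and> \<psi> l k = \<phi> s" by auto
      then show ?thesis unfolding sel_def by (rule someI_ex)
    qed
    define x where "x l k s = (if s = sel l k then 1 else (0::real))" for l k s
    have xf: "assign_feasible L K ?n x"
      unfolding assign_feasible_def
    proof (intro conjI allI impI)
      fix l k s assume "l < L" "k < K" "s < ?n"
      show "x l k s \<in> {0,1}" unfolding x_def by simp
    next
      fix l k assume lk: "l < L" "k < K"
      show "(\<Sum>s<?n. x l k s) = 1" unfolding x_def using selp[OF lk] by simp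
    next
      fix l s assume ls: "l < L" "s < ?n"
      show "(\<Sum>k<K. x l k s) \<le> 1"
      proof (cases "\<exists>k0<K. sel l k0 = s")
        case False
        then have "(\<Sum>k<K. x l k s) = 0" unfolding x_def by (intro sum.neutral) auto
        then show ?thesis by simp
      next
        case True
        then obtain k0 where k0: "k0 < K" "sel l k0 = s" by blast
        have "(\<Sum>k<K. x l k s) = (\<Sum>k<K. if k = k0 then 1 else 0)"
        proof (intro sum.cong refl)
          fix k assume "k \<in> {..<K}"
          then have kK: "k < K" by simp
          show "x l k s = (if k = k0 then 1 else 0)"
          proof (cases "k = k0")
            case False
            have "\<psi> l k \<noteq> \<psi> l k0" using pf ls kK k0 False unfolding feasible_def by blast
            then have "sel l k \<noteq> s" using selp[OF ls(1) kK] selp[OF ls(1) k0(1)] k0 by auto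
            then show ?thesis using False unfolding x_def by simp
          qed (simp add: x_def k0)
        qed
        also have "\<dots> = 1" using k0 by simp
        finally show ?thesis by simp
      qed
    qed
    have "T p \<psi> \<le> (\<Sum>l<L. \<Sum>k<K. \<pi> l k (sel l k))"
      unfolding T_def
    proof (intro sum_mono)
      fix l k assume "l \<in> {..<L}" "k \<in> {..<K}"
      then have lk: "l < L" "k < K" by auto
      have pb: "p l k \<in> {0..Pmax}" using pf lk unfolding feasible_def by auto
      have "2 * sqrt (p l k) * (\<alpha> l k * \<beta> l l k * Re (cinner (\<mu> l k) (\<phi> (sel l k))))
             - p l k * Re (qform (Amat L K \<alpha> \<beta> \<mu> l k) (\<phi> (sel l k))) \<le> \<pi> l k (sel l k)"
        using ps_max[OF lk, of "sel l k"] selp[OF lk] pb unfolding \<pi>_def by blast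
      then show "2 * sqrt (p l k) * \<alpha> l k * \<beta> l l k * Re (cinner (\<mu> l k) (\<psi> l k))
            - p l k * Re (qform (Amat L K \<alpha> \<beta> \<mu> l k) (\<psi> l k)) \<le> \<pi> l k (sel l k)"
        using selp[OF lk] by (simp add: mult.assoc)
    qed
    also have "\<dots> = assign_obj L K ?n \<pi> x"
      unfolding assign_obj_def
    proof (intro sum.cong refl)
      fix l k assume "l \<in> {..<L}" "k \<in> {..<K}"
      then have lk: "l < L" "k < K" by auto
      show "\<pi> l k (sel l k) = (\<Sum>s<?n. \<pi> l k s * x l k s)"
        unfolding x_def using selp[OF lk] by (simp add: if_distrib cong: if_cong)
    qed
    finally show ?thesis using xf by blast
  qed
  define V where "V = assign_obj L K ?n \<pi> ` {x. assign_feasible L K ?n x}"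
  define B where "B = {..<L} \<times> {..<K} \<times> {..<?n}"
  define H where "H g = (\<Sum>l<L. \<Sum>k<K. \<Sum>s<?n. \<pi> l k s * g (l, k, s))" for g :: "nat \<times> nat \<times> nat \<Rightarrow> real"
  have "V \<subseteq> H ` (B \<rightarrow>\<^sub>E {0,1})"
  proof
    fix v assume "v \<in> V"
    then obtain x where xf: "assign_feasible L K ?n x" and v: "v = assign_obj L K ?n \<pi> x"
      unfolding V_def by blast
    define g where "g = restrict (\<lambda>(l,k,s). x l k s) B"
    have "g \<in> B \<rightarrow>\<^sub>E {0,1}" using xf unfolding g_def B_def assign_feasible_def by auto
    moreover have "v = H g" unfolding v H_def assign_obj_def g_def B_def by simp
    ultimately show "v \<in> H ` (B \<rightarrow>\<^sub>E {0,1})" by blast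
  qed
  moreover have "finite (B \<rightarrow>\<^sub>E {0::real,1})" unfolding B_def by (intro finite_PiE) auto
  ultimately have finV: "finite V" by (meson finite_imageI finite_subset)
  define x0 where "x0 (l::nat) (k::nat) (s::nat) = (if s = k then 1 else (0::real))" for l k s
  have x0f: "assign_feasible L K ?n x0"
    unfolding assign_feasible_def x0_def using K_le
    by (auto simp: sum.neutral)
  have neV: "V \<noteq> {}" unfolding V_def using x0f by blast
  have opt: "assign_opt L K ?n \<pi> = Max V"
    unfolding assign_opt_def V_def[symmetric] using finV neV by (rule cSup_eq_Max)
  have optge: "assign_obj L K ?n \<pi> x \<le> assign_opt L K ?n \<pi>" if "assign_feasible L K ?n x" for x
    unfolding opt using finV that unfolding V_def by auto
  obtain xs where xsf: "assign_feasible L K ?n xs" and xso: "assign_obj L K ?n \<pi> xs = assign_opt L K ?n \<pi>"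
    using Max_in[OF finV neV] unfolding opt V_def by auto
  have ub: "fobj L K sigma2 \<alpha> \<beta> p \<psi> \<mu> \<le> assign_opt L K ?n \<pi> - C"
    if pf: "feasible L K Pmax \<phi> p \<psi>" for p \<psi>
  proof -
    obtain x where "assign_feasible L K ?n x" "T p \<psi> \<le> assign_obj L K ?n \<pi> x"
      using bound[OF pf] by blast
    then show ?thesis using optge P1 by fastforce
  qed
  show ?thesis
  proof (intro conjI allI impI)
    fix p \<psi> show "fobj L K sigma2 \<alpha> \<beta> p \<psi> \<mu> =
        (\<Sum>l<L. \<Sum>k<K. 2 * sqrt (p l k) * \<alpha> l k * \<beta> l l k * Re (cinner (\<mu> l k) (\<psi> l k))
            - p l k * Re (qform (Amat L K \<alpha> \<beta> \<mu> l k) (\<psi> l k))) - C"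
      using P1 unfolding T_def by simp
  next
    show "\<exists>p \<psi>. feasible L K Pmax \<phi> p \<psi> \<and> fobj L K sigma2 \<alpha> \<beta> p \<psi> \<mu> = assign_opt L K ?n \<pi> - C"
      apply (rule exI[of _ "\<lambda>l k. \<Sum>s<?n. xs l k s * ps l k s"])
      apply (rule exI[of _ "\<lambda>l k. \<Sum>s<?n. xs l k s *\<^sub>R \<phi> s"])
      using constr[OF xsf] xso P1 by simp
  next
    fix p \<psi> assume "feasible L K Pmax \<phi> p \<psi>"
    then show "fobj L K sigma2 \<alpha> \<beta> p \<psi> \<mu> \<le> assign_opt L K ?n \<pi> - C" by (rule ub)
  next
    fix x assume xa: "assign_feasible L K ?n x \<and> assign_obj L K ?n \<pi> x = assign_opt L K ?n \<pi>"
    show "let p = (\<lambda>l k. \<Sum>s<?n. x l k s * ps l k s);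
               \<psi> = (\<lambda>l k. \<Sum>s<?n. x l k s *\<^sub>R \<phi> s)
           in feasible L K Pmax \<phi> p \<psi> \<and>
              (\<forall>p' \<psi>'. feasible L K Pmax \<phi> p' \<psi>' \<longrightarrow>
                 fobj L K sigma2 \<alpha> \<beta> p' \<psi>' \<mu> \<le> fobj L K sigma2 \<alpha> \<beta> p \<psi> \<mu>)"
      unfolding Let_def using constr[of x] xa ub P1 by auto
  qed
qed

end
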